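(* Let $\Gamma$ be an ordered abelian group and let $v:\mathcal{T}(\Gamma)\to\Gamma'\cup\{\infty\}$ be a valuation on the hyperfield $\mathcal{T}(\Gamma)$ with value group $\Gamma'$. Then there exists a convex subgroup $\Delta$ of $\Gamma$ such that $\Gamma/\Delta\simeq\Gamma'$ via an order-preserving group isomorphism.
   Context: A hyperfield is $(F,+,\cdot,0,1)$ with $+$ a multivalued operation making $(F,+,0)$ a canonical hypergroup (associative, commutative, unique inverses $-x$ with $0\in x+(-x)$, and $z\in x+y\Rightarrow y\in z+(-x)$), $(F,\cdot)$ commutative with $0$ absorbing, $x(y+z)=xy+xz$, and $F\setminus\{0\}$ an abelian group with neutral $1\neq0$. For an ordered abelian group $(\Gamma,+,<,0)$ and $\infty>\Gamma$ with $\gamma+\infty=\infty+\gamma=\infty$, $\mathcal{T}(\Gamma)$ is the hyperfield on $\Gamma\cup\{\infty\}$ with multiplication $+$, zero $\infty$, unit $0$, and hyperaddition $x\boxplus\infty=\infty\boxplus x=\{x\}$, $x\boxplus y=\{\min\{x,y\}\}$ for $x\neq y$, $x\boxplus x=\{z:x\le z\le\infty\}$. Valuation on a hyperfield $F$: a surjective map $v:F\to\Gamma'\cup\{\infty\}$ ($\Gamma'$ ordered abelian group) with $vx=\infty\iff x$ is the zero of $F$, $v(xy)=vx+vy$, $z\in x+y\Rightarrow vz\ge\min\{vx,vy\}$; its value group is the image of the non-zero elements. A subgroup $\Delta\le\Gamma$ is convex if $\delta_1<\gamma<\delta_2$ with $\delta_i\in\Delta$ implies $\gamma\in\Delta$;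 $\Gamma/\Delta$ is ordered by $x+\Delta\prec y+\Delta$ iff $x<y$ and $y-x\notin\Delta$. *)

theory Defs
  imports Main
begin

text \<open>The extended group \<open>\<Gamma> \<union> {\<infinity>}\<close> is modelled as \<open>'a option\<close>,
  with \<open>None\<close> playing the role of \<open>\<infinity>\<close> (greater than every element of \<open>\<Gamma>\<close>).\<close>

definition ext_le :: "'a::linorder option \<Rightarrow> 'a option \<Rightarrow> bool" where
  "ext_le x y = (case y of None \<Rightarrow> True
                  | Some b \<Rightarrow> (case x of None \<Rightarrow> False | Some a \<Rightarrow> a \<le> b))"

definition ext_min :: "'a::linorder option \<Rightarrow> 'a option \<Rightarrow> 'a option" where
  "ext_min x y = (if ext_le x y then x else y)"

text \<open>Addition extended by \<open>\<gamma> + \<infinity> = \<infinity> + \<gamma> = \<infinity>\<close>; this is also the multiplication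
  of the hyperfield \<open>\<T>(\<Gamma>)\<close>.\<close>
definition ext_add :: "'a::plus option \<Rightarrow> 'a option \<Rightarrow> 'a option" where
  "ext_add x y = (case x of None \<Rightarrow> None
                   | Some a \<Rightarrow> (case y of None \<Rightarrow> None | Some b \<Rightarrow> Some (a + b)))"

definition T_hyperadd :: "'a::linorder option \<Rightarrow> 'a option \<Rightarrow> 'a option set" where
  "T_hyperadd x y =
     (if y = None then {x}
      else if x = None then {y}
      else if x \<noteq> y then {ext_min x y}
      else {z. ext_le x z})"

text \<open>Valuation on the hyperfield \<open>\<T>(\<Gamma>)\<close> with values in \<open>\<Gamma>' \<union> {\<infinity>}\<close>;
  surjectivity makes the value group equal to all of \<open>\<Gamma>'\<close>.\<close>
definition T_valuation :: "('a::linordered_ab_group_add option \<Rightarrow> 'b::linordered_ab_group_add option) \<Rightarrow> bool" where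
  "T_valuation v \<longleftrightarrow>
     surj v \<and>
     (\<forall>x. v x = None \<longleftrightarrow> x = None) \<and>
     (\<forall>x y. v (ext_add x y) = ext_add (v x) (v y)) \<and>
     (\<forall>x y z. z \<in> T_hyperadd x y \<longrightarrow> ext_le (ext_min (v x) (v y)) (v z))"

definition subgroup_of :: "'a::ab_group_add set \<Rightarrow> bool" where
  "subgroup_of D \<longleftrightarrow> 0 \<in> D \<and> (\<forall>x\<in>D. \<forall>y\<in>D. x + y \<in> D) \<and> (\<forall>x\<in>D. - x \<in> D)"

definition convex_subgroup :: "'a::linordered_ab_group_add set \<Rightarrow> bool" where
  "convex_subgroup D \<longleftrightarrow> subgroup_of D \<and>
     (\<forall>d1\<in>D. \<forall>d2\<in>D. \<forall>g. d1 < g \<and> g < d2 \<longrightarrow> g \<in> D)"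

definition coset :: "'a::ab_group_add set \<Rightarrow> 'a \<Rightarrow> 'a set" where
  "coset D x = (\<lambda>d. x + d) ` D"

definition quot :: "'a::ab_group_add set \<Rightarrow> 'a set set" where
  "quot D = range (coset D)"

definition quot_less :: "'a::linordered_ab_group_add set \<Rightarrow> 'a set \<Rightarrow> 'a set \<Rightarrow> bool" where
  "quot_less D A B \<longleftrightarrow> (\<exists>x y. A = coset D x \<and> B = coset D y \<and> x < y \<and> y - x \<notin> D)"

definition quot_order_iso :: "'a::linordered_ab_group_add set \<Rightarrow> ('a set \<Rightarrow> 'b::linordered_ab_group_add) \<Rightarrow> bool" where
  "quot_order_iso D f \<longleftrightarrow>
     bij_betw f (quot D) (UNIV :: 'b set) \<and>
     (\<forall>x y. f (coset D (x + y)) = f (coset D x) + f (coset D y)) \<and>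
     (\<forall>A\<in>quot D. \<forall>B\<in>quot D. quot_less D A B \<longleftrightarrow> f A < f B)"

end

theory Submission
  imports Defs
begin

theorem mainTheorem15:
  fixes v :: "'a::linordered_ab_group_add option \<Rightarrow> 'b::linordered_ab_group_add option"
  assumes "T_valuation v"
  shows "\<exists>D :: 'a set. convex_subgroup D \<and> (\<exists>f :: 'a set \<Rightarrow> 'b. quot_order_iso D f)"
proof -
  note V = assms[unfolded T_valuation_def]
  define w where "w a = the (v (Some a))" for a
  have vs: "v (Some a) = Some (w a)" for a
    using V unfolding w_def by (cases "v (Some a)") auto
  have wadd: "w (a + b) = w a + w b" for a b
    using V[THEN conjunct2, THEN conjunct2, THEN conjunct1, rule_format, of "Some a" "Some b"]
    by (simp add: vs ext_add_def)
  have w0: "w 0 = 0" using wadd[of 0 0] by simp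
  have wneg: "w (- a) = - w a" for a using wadd[of a "-a"] w0 by (simp add: eq_neg_iff_add_eq_0 add.commute)
  have wdiff: "w (a - b) = w a - w b" for a b using wadd[of a "-b"] wneg[of b] by simp
  have wsurj: "\<exists>a. w a = b" for b
  proof -
    obtain x where x: "v x = Some b" using V by (metis surjD)
    then obtain a where "x = Some a" using V by (cases x) (metis option.distinct(1), blast)
    thus ?thesis using x vs by auto
  qed
  have wmono: "w a \<le> w b" if "a \<le> b" for a b
  proof (cases "a = b")
    case False
    have "Some b \<in> T_hyperadd (Some a) (Some a)"
      using that by (simp add: T_hyperadd_def ext_le_def)
    hence "ext_le (ext_min (v (Some a)) (v (Some a))) (v (Some b))"
      using V by blast
    thus ?thesis by (simp add: vs ext_min_def ext_le_def)
  qed simp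
  define D where "D = {a. w a = 0}"
  have cs: "convex_subgroup D"
    unfolding convex_subgroup_def subgroup_of_def D_def
    using w0 wadd wneg wmono by (auto intro: order.antisym less_imp_le) (metis less_imp_le order.antisym)
  have coset_eq: "coset D x = coset D y \<longleftrightarrow> w x = w y" for x y
  proof
    assume "coset D x = coset D y"
    hence "y \<in> coset D x" unfolding coset_def using w0 D_def by (metis (mono_tags) add_0_right image_eqI mem_Collect_eq)
    then obtain d where "y = x + d" "w d = 0" unfolding coset_def D_def by auto
    thus "w x = w y" by (simp add: wadd)
  next
    assume e: "w x = w y"
    have 1: "coset D x \<subseteq> coset D y" if "w x = w y" for x y
    proof
      fix z assume "z \<in> coset D x"
      then obtain d where d: "z = x + d" "w d = 0" unfolding coset_def D_def by auto
      have "z = y + (x - y + d)" using d by simp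
      moreover have "w (x - y + d) = 0" using d that by (simp add: wadd wdiff)
      ultimately show "z \<in> coset D y" unfolding coset_def D_def by blast
    qed
    show "coset D x = coset D y" using 1[OF e] 1[OF e[symmetric]] by blast
  qed
  define f where "f A = w (SOME x. A = coset D x)" for A
  have fc: "f (coset D x) = w x" for x
  proof -
    have "coset D x = coset D (SOME y. coset D x = coset D y)" by (rule someI) simp
    thus ?thesis unfolding f_def using coset_eq by metis
  qed
  have "quot_order_iso D f"
    unfolding quot_order_iso_def
  proof (intro conjI allI ballI)
    show "bij_betw f (quot D) UNIV"
      unfolding bij_betw_def inj_on_def quot_def
      using fc coset_eq wsurj by (auto, metis rangeI image_eqI)
    show "f (coset D (x + y)) = f (coset D x) + f (coset D y)" for x y
      by (simp add: fc wadd)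
  next
    fix A B assume A: "A \<in> quot D" and B: "B \<in> quot D"
    then obtain x y where xy: "A = coset D x" "B = coset D y" unfolding quot_def by auto
    show "quot_less D A B \<longleftrightarrow> f A < f B"
    proof
      assume "quot_less D A B"
      then obtain a b where ab: "A = coset D a" "B = coset D b" "a < b" "b - a \<notin> D"
        unfolding quot_less_def by auto
      have "w a \<le> w b" using ab wmono by simp
      moreover have "w a \<noteq> w b" using ab(4) wdiff unfolding D_def by auto
      ultimately show "f A < f B" using ab fc by simp
    next
      assume "f A < f B"
      hence lt: "w x < w y" using xy fc by simp
      hence "x < y" using wmono by (meson not_le)
      moreover have "y - x \<notin> D" using lt wdiff unfolding D_def by auto
      ultimately show "quot_less D A B" unfolding quot_less_def using xy by blast
    qed
  qed
  thus ?thesis using cs by blast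
qed

end
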